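(* For any positive integers $n$ and $k$ there exists a QCQP in $N:=nk$ variables with $m:=k+1$ constraints such that: Assumptions A and C hold; the quadratic eigenvalue multiplicity of the QCQP equals $k$; $k\ge \operatorname{affdim}(\{b(\gamma):\gamma\in\mathcal F\})$ for every semidefinite face $\mathcal F$ of $\Gamma$; but $\mathrm{Opt}\neq\mathrm{Opt}_{\mathrm{SDP}}$ (and hence $\operatorname{conv}(\mathcal D)\neq\mathcal D_{\mathrm{SDP}}$).
   Context: A QCQP is given by integers $N\ge 1$, $m_I,m_E\ge 0$, $m:=m_I+m_E\ge 1$ and, for $i\in[0,m]$ ($[a,b]=\{a,\dots,b\}$, $[n]=[1,n]$), $q_i(x)=x^\top A_ix+2b_i^\top x+c_i$ with $A_i\in\mathbb S^N$, $b_i\in\mathbb R^N$, $c_i\in\mathbb R$. $\mathrm{Opt}:=\inf\{q_0(x): q_i(x)\le 0\ \forall i\in[m_I],\ q_i(x)=0\ \forall i\in[m_I+1,m]\}$; $\mathcal D:=\{(x,t): q_0(x)\le 2t$ and the same constraints$\}$. With $Q_i=\begin{pmatrix}c_i& b_i^\top\\ b_i& A_i\end{pmatrix}$: $\mathrm{Opt}_{\mathrm{SDP}}:=\inf\{\langle Q_0,Y\rangle: Y=\begin{pmatrix}1&x^\top\\ x& X\end{pmatrix}\succeq 0,\ X\in\mathbb S^N,\ \langle Q_i,Y\rangle\le 0\ \forall i\in[m_I],\ \langle Q_i,Y\rangle=0\ \forall i\in[m_I+1,m]\}$; $\mathcal D_{\mathrm{SDP}}:=\{(x,t):\exists X$ with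 $Y\succeq0$, $\langle Q_0,Y\rangle\le 2t$ and the same constraints$\}$. $A(\gamma)=A_0+\sum\gamma_iA_i$, $b(\gamma)=b_0+\sum\gamma_ib_i$; $\Gamma:=\{\gamma\in\mathbb R^m: A(\gamma)\succeq0,\ \gamma_i\ge0\ \forall i\in[m_I]\}$. Assumption A: the QCQP feasible set is nonempty and some $\gamma^*$ with $\gamma^*_i\ge0$ ($i\in[m_I]$) has $A(\gamma^* )\succ0$. Assumption C: $\Gamma$ is a polyhedron. A nonempty face $\mathcal F$ of $\Gamma$ is semidefinite if no $\gamma\in\mathcal F$ has $A(\gamma)\succ0$. The quadratic eigenvalue multiplicity is the largest integer $k$ (with $N=nk$) such that each $A_i=I_k\otimes\mathcal A_i$ for some $\mathcal A_i\in\mathbb S^n$. $\operatorname{affdim}$ is the dimension of the affine hull. *)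

theory Defs
  imports "HOL-Analysis.Analysis"
begin

text \<open>Vectors of R^d are functions nat => real, only the coordinates
  0..d-1 are relevant (points are canonically taken to vanish outside). Matrices of
  size d are functions nat => nat => real, only entries with indices < d are relevant.
  A QCQP is given by N, m_I, m_E and families A, b, c indexed by i in 0..m, m = m_I + m_E.
  Multiplier vectors gamma in R^m use the coordinates 1..m (and vanish elsewhere).\<close>

definition supp_in :: "nat set \<Rightarrow> (nat \<Rightarrow> real) \<Rightarrow> bool" where
  "supp_in I x \<longleftrightarrow> (\<forall>j. j \<notin> I \<longrightarrow> x j = 0)"

definition sym_mat :: "nat \<Rightarrow> (nat \<Rightarrow> nat \<Rightarrow> real) \<Rightarrow> bool" where
  "sym_mat d M \<longleftrightarrow> (\<forall>i<d. \<forall>j<d. M i j = M j i)"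

definition quad_form :: "nat \<Rightarrow> (nat \<Rightarrow> nat \<Rightarrow> real) \<Rightarrow> (nat \<Rightarrow> real) \<Rightarrow> real" where
  "quad_form d M v = (\<Sum>i<d. \<Sum>j<d. v i * M i j * v j)"

definition psd :: "nat \<Rightarrow> (nat \<Rightarrow> nat \<Rightarrow> real) \<Rightarrow> bool" where
  "psd d M \<longleftrightarrow> sym_mat d M \<and> (\<forall>v. quad_form d M v \<ge> 0)"

definition pd :: "nat \<Rightarrow> (nat \<Rightarrow> nat \<Rightarrow> real) \<Rightarrow> bool" where
  "pd d M \<longleftrightarrow> sym_mat d M \<and> (\<forall>v. (\<exists>i<d. v i \<noteq> 0) \<longrightarrow> quad_form d M v > 0)"

definition frob :: "nat \<Rightarrow> (nat \<Rightarrow> nat \<Rightarrow> real) \<Rightarrow> (nat \<Rightarrow> nat \<Rightarrow> real) \<Rightarrow> real" where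
  "frob d P Q = (\<Sum>i<d. \<Sum>j<d. P i j * Q i j)"

definition qfun :: "nat \<Rightarrow> (nat \<Rightarrow> nat \<Rightarrow> nat \<Rightarrow> real) \<Rightarrow> (nat \<Rightarrow> nat \<Rightarrow> real)
      \<Rightarrow> (nat \<Rightarrow> real) \<Rightarrow> nat \<Rightarrow> (nat \<Rightarrow> real) \<Rightarrow> real" where
  "qfun N A b c i x = quad_form N (A i) x + 2 * (\<Sum>j<N. b i j * x j) + c i"

definition feas :: "nat \<Rightarrow> nat \<Rightarrow> nat \<Rightarrow> (nat \<Rightarrow> nat \<Rightarrow> nat \<Rightarrow> real) \<Rightarrow> (nat \<Rightarrow> nat \<Rightarrow> real)
      \<Rightarrow> (nat \<Rightarrow> real) \<Rightarrow> (nat \<Rightarrow> real) set" where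
  "feas N mI mE A b c = {x. supp_in {..<N} x
      \<and> (\<forall>i\<in>{1..mI}. qfun N A b c i x \<le> 0)
      \<and> (\<forall>i\<in>{mI+1..mI+mE}. qfun N A b c i x = 0)}"

definition Opt :: "nat \<Rightarrow> nat \<Rightarrow> nat \<Rightarrow> (nat \<Rightarrow> nat \<Rightarrow> nat \<Rightarrow> real) \<Rightarrow> (nat \<Rightarrow> nat \<Rightarrow> real)
      \<Rightarrow> (nat \<Rightarrow> real) \<Rightarrow> ereal" where
  "Opt N mI mE A b c = (INF x\<in>feas N mI mE A b c. ereal (qfun N A b c 0 x))"

definition Dset :: "nat \<Rightarrow> nat \<Rightarrow> nat \<Rightarrow> (nat \<Rightarrow> nat \<Rightarrow> nat \<Rightarrow> real) \<Rightarrow> (nat \<Rightarrow> nat \<Rightarrow> real)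
      \<Rightarrow> (nat \<Rightarrow> real) \<Rightarrow> ((nat \<Rightarrow> real) \<times> real) set" where
  "Dset N mI mE A b c = {(x, t). x \<in> feas N mI mE A b c \<and> qfun N A b c 0 x \<le> 2 * t}"

text \<open>Bordered matrices Q_i = [[c_i, b_i^T],[b_i, A_i]] and Y = [[1, x^T],[x, X]], size N+1,
  with index 0 for the border and index j+1 for coordinate j.\<close>
definition Qmat :: "(nat \<Rightarrow> nat \<Rightarrow> nat \<Rightarrow> real) \<Rightarrow> (nat \<Rightarrow> nat \<Rightarrow> real) \<Rightarrow> (nat \<Rightarrow> real)
      \<Rightarrow> nat \<Rightarrow> nat \<Rightarrow> nat \<Rightarrow> real" where
  "Qmat A b c i r s = (if r = 0 \<and> s = 0 then c i
      else if r = 0 then b i (s - 1) else if s = 0 then b i (r - 1)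
      else A i (r - 1) (s - 1))"

definition Ymat :: "(nat \<Rightarrow> real) \<Rightarrow> (nat \<Rightarrow> nat \<Rightarrow> real) \<Rightarrow> nat \<Rightarrow> nat \<Rightarrow> real" where
  "Ymat x X r s = (if r = 0 \<and> s = 0 then 1
      else if r = 0 then x (s - 1) else if s = 0 then x (r - 1)
      else X (r - 1) (s - 1))"

definition sdp_feas :: "nat \<Rightarrow> nat \<Rightarrow> nat \<Rightarrow> (nat \<Rightarrow> nat \<Rightarrow> nat \<Rightarrow> real) \<Rightarrow> (nat \<Rightarrow> nat \<Rightarrow> real)
      \<Rightarrow> (nat \<Rightarrow> real) \<Rightarrow> ((nat \<Rightarrow> real) \<times> (nat \<Rightarrow> nat \<Rightarrow> real)) set" where
  "sdp_feas N mI mE A b c = {(x, X). supp_in {..<N} x \<and> sym_mat N X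
      \<and> psd (N + 1) (Ymat x X)
      \<and> (\<forall>i\<in>{1..mI}. frob (N + 1) (Qmat A b c i) (Ymat x X) \<le> 0)
      \<and> (\<forall>i\<in>{mI+1..mI+mE}. frob (N + 1) (Qmat A b c i) (Ymat x X) = 0)}"

definition Opt_SDP :: "nat \<Rightarrow> nat \<Rightarrow> nat \<Rightarrow> (nat \<Rightarrow> nat \<Rightarrow> nat \<Rightarrow> real) \<Rightarrow> (nat \<Rightarrow> nat \<Rightarrow> real)
      \<Rightarrow> (nat \<Rightarrow> real) \<Rightarrow> ereal" where
  "Opt_SDP N mI mE A b c =
     (INF xX\<in>sdp_feas N mI mE A b c. ereal (frob (N + 1) (Qmat A b c 0) (Ymat (fst xX) (snd xX))))"

definition D_SDP :: "nat \<Rightarrow> nat \<Rightarrow> nat \<Rightarrow> (nat \<Rightarrow> nat \<Rightarrow> nat \<Rightarrow> real) \<Rightarrow> (nat \<Rightarrow> nat \<Rightarrow> real)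
      \<Rightarrow> (nat \<Rightarrow> real) \<Rightarrow> ((nat \<Rightarrow> real) \<times> real) set" where
  "D_SDP N mI mE A b c = {(x, t). \<exists>X. (x, X) \<in> sdp_feas N mI mE A b c
      \<and> frob (N + 1) (Qmat A b c 0) (Ymat x X) \<le> 2 * t}"

definition conv_pairs :: "((nat \<Rightarrow> real) \<times> real) set \<Rightarrow> ((nat \<Rightarrow> real) \<times> real) set" where
  "conv_pairs S = {(y, s). \<exists>(p::nat) u P. (\<forall>l<p. u l \<ge> 0 \<and> P l \<in> S) \<and> (\<Sum>l<p. u l) = 1
      \<and> y = (\<lambda>j. \<Sum>l<p. u l * fst (P l) j) \<and> s = (\<Sum>l<p. u l * snd (P l))}"

definition Agam :: "nat \<Rightarrow> (nat \<Rightarrow> nat \<Rightarrow> nat \<Rightarrow> real) \<Rightarrow> (nat \<Rightarrow> real) \<Rightarrow> nat \<Rightarrow> nat \<Rightarrow> real" where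
  "Agam m A \<gamma> r s = A 0 r s + (\<Sum>i\<in>{1..m}. \<gamma> i * A i r s)"

definition bgam :: "nat \<Rightarrow> nat \<Rightarrow> (nat \<Rightarrow> nat \<Rightarrow> real) \<Rightarrow> (nat \<Rightarrow> real) \<Rightarrow> nat \<Rightarrow> real" where
  "bgam N m b \<gamma> r = (if r < N then b 0 r + (\<Sum>i\<in>{1..m}. \<gamma> i * b i r) else 0)"

definition Gamma :: "nat \<Rightarrow> nat \<Rightarrow> nat \<Rightarrow> (nat \<Rightarrow> nat \<Rightarrow> nat \<Rightarrow> real) \<Rightarrow> (nat \<Rightarrow> real) set" where
  "Gamma N mI mE A = {\<gamma>. supp_in {1..mI+mE} \<gamma> \<and> psd N (Agam (mI+mE) A \<gamma>)
      \<and> (\<forall>i\<in>{1..mI}. \<gamma> i \<ge> 0)}"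

definition assumption_A :: "nat \<Rightarrow> nat \<Rightarrow> nat \<Rightarrow> (nat \<Rightarrow> nat \<Rightarrow> nat \<Rightarrow> real) \<Rightarrow> (nat \<Rightarrow> nat \<Rightarrow> real)
      \<Rightarrow> (nat \<Rightarrow> real) \<Rightarrow> bool" where
  "assumption_A N mI mE A b c \<longleftrightarrow> feas N mI mE A b c \<noteq> {}
      \<and> (\<exists>\<gamma>. (\<forall>i\<in>{1..mI}. \<gamma> i \<ge> 0) \<and> pd N (Agam (mI+mE) A \<gamma>))"

definition polyhedron_in :: "nat \<Rightarrow> (nat \<Rightarrow> real) set \<Rightarrow> bool" where
  "polyhedron_in m S \<longleftrightarrow> (\<exists>(p::nat) (a::nat \<Rightarrow> nat \<Rightarrow> real) (\<beta>::nat \<Rightarrow> real).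
      S = {\<gamma>. supp_in {1..m} \<gamma> \<and> (\<forall>l<p. (\<Sum>i\<in>{1..m}. a l i * \<gamma> i) \<le> \<beta> l)})"

definition assumption_C :: "nat \<Rightarrow> nat \<Rightarrow> nat \<Rightarrow> (nat \<Rightarrow> nat \<Rightarrow> nat \<Rightarrow> real) \<Rightarrow> bool" where
  "assumption_C N mI mE A \<longleftrightarrow> polyhedron_in (mI + mE) (Gamma N mI mE A)"

definition comb :: "real \<Rightarrow> (nat \<Rightarrow> real) \<Rightarrow> (nat \<Rightarrow> real) \<Rightarrow> nat \<Rightarrow> real" where
  "comb t x y = (\<lambda>j. (1 - t) * x j + t * y j)"

definition convex_fset :: "(nat \<Rightarrow> real) set \<Rightarrow> bool" where
  "convex_fset S \<longleftrightarrow> (\<forall>x\<in>S. \<forall>y\<in>S. \<forall>t. 0 \<le> t \<and> t \<le> 1 \<longrightarrow> comb t x y \<in> S)"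

definition face_in :: "(nat \<Rightarrow> real) set \<Rightarrow> (nat \<Rightarrow> real) set \<Rightarrow> bool" where
  "face_in F C \<longleftrightarrow> F \<subseteq> C \<and> convex_fset F
      \<and> (\<forall>x\<in>C. \<forall>y\<in>C. \<forall>t. 0 < t \<and> t < 1 \<and> comb t x y \<in> F \<longrightarrow> x \<in> F \<and> y \<in> F)"

definition semidefinite_face :: "nat \<Rightarrow> nat \<Rightarrow> nat \<Rightarrow> (nat \<Rightarrow> nat \<Rightarrow> nat \<Rightarrow> real) \<Rightarrow> (nat \<Rightarrow> real) set \<Rightarrow> bool" where
  "semidefinite_face N mI mE A F \<longleftrightarrow> F \<noteq> {} \<and> face_in F (Gamma N mI mE A)
      \<and> \<not> (\<exists>\<gamma>\<in>F. pd N (Agam (mI+mE) A \<gamma>))"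

definition lin_indep :: "nat \<Rightarrow> (nat \<Rightarrow> nat \<Rightarrow> real) \<Rightarrow> bool" where
  "lin_indep r v \<longleftrightarrow> (\<forall>u. (\<forall>j. (\<Sum>l<r. u l * v l j) = 0) \<longrightarrow> (\<forall>l<r. u l = 0))"

definition span_dim :: "(nat \<Rightarrow> real) set \<Rightarrow> nat" where
  "span_dim V = (GREATEST r. \<exists>v. (\<forall>l<r. v l \<in> V) \<and> lin_indep r v)"

definition affdim :: "(nat \<Rightarrow> real) set \<Rightarrow> int" where
  "affdim S = (if S = {} then -1 else int (span_dim {(\<lambda>j. x j - y j) | x y. x \<in> S \<and> y \<in> S}))"

definition is_kron_id :: "nat \<Rightarrow> nat \<Rightarrow> (nat \<Rightarrow> nat \<Rightarrow> real) \<Rightarrow> (nat \<Rightarrow> nat \<Rightarrow> real) \<Rightarrow> bool" where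
  "is_kron_id k n M' M \<longleftrightarrow> (\<forall>p<k. \<forall>q<k. \<forall>a<n. \<forall>a'<n.
      M (p * n + a) (q * n + a') = (if p = q then M' a a' else 0))"

definition quad_eig_mult :: "nat \<Rightarrow> nat \<Rightarrow> nat \<Rightarrow> (nat \<Rightarrow> nat \<Rightarrow> nat \<Rightarrow> real) \<Rightarrow> nat" where
  "quad_eig_mult N mI mE A = (GREATEST k. \<exists>n. N = n * k \<and>
      (\<forall>i\<in>{0..mI+mE}. \<exists>M'. sym_mat n M' \<and> is_kron_id k n M' (A i)))"

end

theory Submission
  imports Defs "HOL-Library.Function_Algebras"
begin


interpretation fv: vector_space "\<lambda>(c::real) (f::nat\<Rightarrow>real). (\<lambda>j. c * f j)"
  by unfold_locales (auto simp: fun_eq_iff algebra_simps)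

lemma sum_fun_app: "finite A \<Longrightarrow> (\<Sum>i\<in>A. (f i :: nat \<Rightarrow> real)) x = (\<Sum>i\<in>A. f i x)"
  by (induction A rule: finite_induct) auto

lemma lin_indep_inj: assumes "lin_indep r v" shows "inj_on v {..<r}"
proof (rule inj_onI, rule ccontr)
  fix a b assume ab: "a \<in> {..<r}" "b \<in> {..<r}" "v a = v b" "a \<noteq> b"
  define u where "u = (\<lambda>l. if l = a then (1::real) else if l = b then -1 else 0)"
  have "\<forall>j. (\<Sum>l<r. u l * v l j) = 0"
  proof
    fix j
    have "(\<Sum>l<r. u l * v l j) = (\<Sum>l\<in>{a,b}. u l * v l j)"
      by (rule sum.mono_neutral_right) (use ab in \<open>auto simp: u_def\<close>)
    also have "\<dots> = 0" using ab by (simp add: u_def)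
    finally show "(\<Sum>l<r. u l * v l j) = 0" .
  qed
  with assms ab show False unfolding lin_indep_def u_def by force
qed

lemma lin_indep_bound:
  assumes fin: "finite S" and supp: "\<forall>l<r. \<forall>j. j \<notin> S \<longrightarrow> v l j = 0"
    and li: "lin_indep r v"
  shows "r \<le> card S"
proof -
  define e where "e = (\<lambda>a (j::nat). if j = a then (1::real) else 0)"
  have inj: "inj_on v {..<r}" by (rule lin_indep_inj[OF li])
  have ind: "fv.independent (v ` {..<r})"
  proof (rule fv.independent_if_scalars_zero)
    show "finite (v ` {..<r})" by simp
  next
    fix f x assume h: "(\<Sum>x\<in>v ` {..<r}. (\<lambda>j. f x * x j)) = 0" and x: "x \<in> v ` {..<r}"
    have "\<forall>j. (\<Sum>l<r. f (v l) * v l j) = 0"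
    proof
      fix j
      have "(\<Sum>l<r. f (v l) * v l j) = (\<Sum>x\<in>v ` {..<r}. (\<lambda>j. f x * x j)) j"
        by (simp add: sum_fun_app sum.reindex[OF inj])
      then show "(\<Sum>l<r. f (v l) * v l j) = 0" using h by simp
    qed
    moreover have "(\<forall>j. (\<Sum>l<r. f (v l) * v l j) = 0) \<longrightarrow> (\<forall>l<r. f (v l) = 0)"
      using li[unfolded lin_indep_def, THEN spec[where x="\<lambda>l. f (v l)"]] by simp
    ultimately have "\<forall>l<r. f (v l) = 0" by blast
    with x show "f x = 0" by auto
  qed
  have sp: "v ` {..<r} \<subseteq> fv.span (e ` S)"
  proof
    fix w assume "w \<in> v ` {..<r}"
    then obtain l where l: "l < r" "w = v l" by auto
    have d: "(\<Sum>a\<in>S. v l a * (if x = a then 1 else 0)) = (if x \<in> S then v l x else 0)" for x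
    proof -
      have "(\<Sum>a\<in>S. v l a * (if x = a then 1 else 0)) = (\<Sum>a\<in>S. if x = a then v l a else 0)"
        by (rule sum.cong) auto
      then show ?thesis using fin by simp
    qed
    have "w = (\<Sum>a\<in>S. (\<lambda>j. w a * e a j))"
      using supp l by (auto simp: fun_eq_iff sum_fun_app[OF fin] e_def d)
    also have "\<dots> \<in> fv.span (e ` S)"
      by (intro fv.span_sum fv.span_scale fv.span_base) auto
    finally show "w \<in> fv.span (e ` S)" .
  qed
  have "card (v ` {..<r}) \<le> card (e ` S)"
    using fv.independent_span_bound[OF _ ind sp] fin by auto
  also have "\<dots> \<le> card S" using fin by (rule card_image_le)
  finally show ?thesis using card_image[OF inj] by simp
qed



definition diagm :: "(nat \<Rightarrow> real) \<Rightarrow> nat \<Rightarrow> nat \<Rightarrow> real" where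
  "diagm e = (\<lambda>r s. if r = s then e r else 0)"

lemma quad_diag: "quad_form d (diagm e) (v::nat\<Rightarrow>real) = (\<Sum>j<d. e j * (v j)^2)"
proof -
  have "quad_form d (diagm e) v = (\<Sum>i<d. \<Sum>j<d. if j = i then v i * e i * v i else 0)"
    unfolding quad_form_def diagm_def by (intro sum.cong refl) auto
  also have "\<dots> = (\<Sum>j<d. e j * (v j)^2)"
    by (simp add: power2_eq_square mult_ac)
  finally show ?thesis .
qed

lemma sym_diag: "sym_mat d (diagm e)"
  by (auto simp: sym_mat_def diagm_def)

lemma psd_diag: "psd d (diagm e) \<longleftrightarrow> (\<forall>j<d. e j \<ge> 0)"
proof
  assume h: "psd d (diagm e)"
  show "\<forall>j<d. e j \<ge> 0"
  proof (intro allI impI)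
    fix j assume j: "j < d"
    have "0 \<le> quad_form d (diagm e) (\<lambda>i. if i = j then 1 else 0)"
      using h by (simp add: psd_def)
    also have "\<dots> = (\<Sum>i<d. if i = j then e j else 0)"
      unfolding quad_diag by (intro sum.cong refl) auto
    also have "\<dots> = e j" using j by simp
    finally show "e j \<ge> 0" .
  qed
next
  assume "\<forall>j<d. e j \<ge> 0"
  then show "psd d (diagm e)"
    by (auto simp: psd_def sym_diag quad_diag intro!: sum_nonneg)
qed

lemma pd_diag: assumes "\<forall>j<d. e j > 0" shows "pd d (diagm e)"
  unfolding pd_def
proof (intro conjI sym_diag allI impI)
  fix v :: "nat \<Rightarrow> real" assume "\<exists>i<d. v i \<noteq> 0"
  then obtain i where i: "i < d" "v i \<noteq> 0" by auto
  show "0 < quad_form d (diagm e) v" unfolding quad_diag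
    by (rule sum_pos2[of _ i]) (use i assms in \<open>auto intro: less_imp_le\<close>)
qed

lemma frob_diag: "frob d P (diagm e) = (\<Sum>r<d. P r r * e r)"
proof -
  have "frob d P (diagm e) = (\<Sum>r<d. \<Sum>s<d. if s = r then P r r * e r else 0)"
    unfolding frob_def diagm_def by (intro sum.cong refl) auto
  then show ?thesis by simp
qed

definition eA :: "nat \<Rightarrow> nat \<Rightarrow> nat \<Rightarrow> real" where
  "eA n i r = (if i = 0 then (if r mod n = 0 then -1 else 2) else if i = 1 then 1 else 0)"

definition Ad :: "nat \<Rightarrow> nat \<Rightarrow> nat \<Rightarrow> nat \<Rightarrow> real" where
  "Ad n i = diagm (eA n i)"

definition bd :: "nat \<Rightarrow> nat \<Rightarrow> nat \<Rightarrow> nat \<Rightarrow> real" where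
  "bd n k i r = (if i = 0 then (if r < n*k \<and> r mod n = 0 then 1/2 else 0)
     else if 2 \<le> i \<and> i \<le> k+1 \<and> r = (i-2)*n then -1/2 else 0)"

definition cd :: "nat \<Rightarrow> real" where "cd i = (if i = 1 then -1 else 0)"

lemma Agam_Ad: "Agam (k+1) (Ad n) \<gamma> = diagm (\<lambda>r. eA n 0 r + \<gamma> 1)"
proof -
  have "(\<Sum>i\<in>{1..k+1}. \<gamma> i * eA n i r) = \<gamma> 1" for r
  proof -
    have "(\<Sum>i\<in>{1..k+1}. \<gamma> i * eA n i r) = (\<Sum>i\<in>{1..k+1}. if i = 1 then \<gamma> 1 else 0)"
      by (intro sum.cong refl) (auto simp: eA_def)
    then show ?thesis by simp
  qed
  then show ?thesis
    by (auto simp: fun_eq_iff Agam_def Ad_def diagm_def)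
qed



lemma sum_bd_lin:
  assumes "n \<ge> 1" "p < k"
  shows "(\<Sum>j<n*k. bd n k (p+2) j * x j) = - (1/2) * x (p*n)"
proof -
  have "(\<Sum>j<n*k. bd n k (p+2) j * x j) = (\<Sum>j<n*k. if j = p*n then - (1/2) * x (p*n) else 0)"
    by (intro sum.cong refl) (use assms in \<open>auto simp: bd_def\<close>)
  also have "\<dots> = - (1/2) * x (p*n)"
  proof -
    have "p*n < n*k" using assms by (simp add: mult.commute)
    then show ?thesis by simp
  qed
  finally show ?thesis .
qed

lemma qfun0_nonneg:
  assumes n: "n \<ge> 1" and k: "k \<ge> 1"
    and x: "x \<in> feas (n*k) (k+1) 0 (Ad n) (bd n k) cd"
  shows "qfun (n*k) (Ad n) (bd n k) cd 0 x \<ge> 0"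
proof -
  let ?N = "n*k"
  have c: "\<forall>i\<in>{1..k+1}. qfun ?N (Ad n) (bd n k) cd i x \<le> 0"
    using x by (simp add: feas_def)
  have q1: "qfun ?N (Ad n) (bd n k) cd 1 x = (\<Sum>j<?N. (x j)^2) - 1"
    by (simp add: qfun_def Ad_def quad_diag eA_def bd_def cd_def)
  have sq: "(\<Sum>j<?N. (x j)^2) \<le> 1" using c q1 by force
  have pos: "x j \<ge> 0" if "j < ?N" "j mod n = 0" for j
  proof -
    define p where "p = j div n"
    have pk: "p < k" unfolding p_def using that
      by (metis less_mult_imp_div_less mult.commute)
    have pj: "p * n = j" unfolding p_def using that by (metis mult_div_mod_eq add_0_right mult.commute)
    have "p + 2 \<in> {1..k+1}" using pk by auto
    then have "qfun ?N (Ad n) (bd n k) cd (p+2) x \<le> 0" using c by blast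
    moreover have "qfun ?N (Ad n) (bd n k) cd (p+2) x = - x (p*n)"
    proof -
      have "quad_form ?N (Ad n (p+2)) x = 0"
        by (simp add: Ad_def quad_diag eA_def)
      then show ?thesis using sum_bd_lin[OF n pk, of x]
        by (simp add: qfun_def cd_def)
    qed
    ultimately show ?thesis using pj by simp
  qed
  have le1: "x j \<le> 1" if "j < ?N" for j
  proof -
    have "(x j)^2 \<le> (\<Sum>j<?N. (x j)^2)"
      by (rule member_le_sum) (use that in auto)
    then have "(x j)^2 \<le> 1" using sq by simp
    then show ?thesis by (simp add: abs_square_le_1)
  qed
  have "qfun ?N (Ad n) (bd n k) cd 0 x = (\<Sum>j<?N. eA n 0 j * (x j)^2 + 2 * (bd n k 0 j * x j))"
    by (simp add: qfun_def Ad_def quad_diag cd_def sum.distrib sum_distrib_left)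
  also have "\<dots> \<ge> 0"
  proof (rule sum_nonneg)
    fix j assume j: "j \<in> {..<?N}"
    show "0 \<le> eA n 0 j * (x j)^2 + 2 * (bd n k 0 j * x j)"
    proof (cases "j mod n = 0")
      case True
      then have "eA n 0 j * (x j)^2 + 2 * (bd n k 0 j * x j) = x j * (1 - x j)"
        using j by (simp add: eA_def bd_def power2_eq_square algebra_simps)
      also have "\<dots> \<ge> 0" using pos[of j] le1[of j] j True by simp
      finally show ?thesis .
    next
      case False
      then show ?thesis by (simp add: eA_def bd_def)
    qed
  qed
  finally show ?thesis .
qed



definition X0 :: "nat \<Rightarrow> nat \<Rightarrow> real" where "X0 = diagm (\<lambda>r. if r = 0 then 1 else 0)"

lemma Y0: "Ymat (\<lambda>_. 0) X0 = diagm (\<lambda>r. if r \<le> 1 then 1 else 0)"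
  by (auto simp: fun_eq_iff Ymat_def X0_def diagm_def)

lemma frob_Y0: assumes "N \<ge> 1" shows "frob (N+1) P (Ymat (\<lambda>_. 0) X0) = P 0 0 + P 1 1"
proof -
  have "frob (N+1) P (Ymat (\<lambda>_. 0) X0) = (\<Sum>r<N+1. P r r * (if r \<le> 1 then 1 else 0))"
    by (simp add: Y0 frob_diag)
  also have "\<dots> = (\<Sum>r\<in>{0,1}. P r r * (if r \<le> 1 then 1 else 0))"
    by (rule sum.mono_neutral_right) (use assms in auto)
  also have "\<dots> = P 0 0 + P 1 1" by simp
  finally show ?thesis .
qed

lemma Qmat00: "Qmat A b c i 0 0 = c i" and Qmat11: "Qmat A b c i 1 1 = A i 0 0"
  by (simp_all add: Qmat_def)

lemma sdp_pt:
  assumes n: "n \<ge> 1" and k: "k \<ge> 1"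
  shows "((\<lambda>_. 0), X0) \<in> sdp_feas (n*k) (k+1) 0 (Ad n) (bd n k) cd"
    and "frob (n*k + 1) (Qmat (Ad n) (bd n k) cd 0) (Ymat (\<lambda>_. 0) X0) = -1"
proof -
  have N: "n*k \<ge> 1" using n k by simp
  show "frob (n*k + 1) (Qmat (Ad n) (bd n k) cd 0) (Ymat (\<lambda>_. 0) X0) = -1"
    unfolding frob_Y0[OF N] by (simp add: Qmat_def Ad_def diagm_def eA_def cd_def)
  have "\<forall>i\<in>{1..k+1}. frob (n*k + 1) (Qmat (Ad n) (bd n k) cd i) (Ymat (\<lambda>_. 0) X0) \<le> 0"
    unfolding frob_Y0[OF N] by (auto simp: Qmat_def Ad_def diagm_def eA_def cd_def)
  then show "((\<lambda>_. 0), X0) \<in> sdp_feas (n*k) (k+1) 0 (Ad n) (bd n k) cd"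
    using sym_diag[of "n*k" "\<lambda>r. if r = 0 then 1 else 0"]
    by (simp add: sdp_feas_def supp_in_def Y0 psd_diag flip: X0_def)
qed

lemma Gamma_char:
  assumes n: "n \<ge> 1" and k: "k \<ge> 1"
  shows "Gamma (n*k) (k+1) 0 (Ad n) = {\<gamma>. supp_in {1..k+1} \<gamma> \<and> (\<forall>i\<in>{1..k+1}. \<gamma> i \<ge> 0) \<and> \<gamma> 1 \<ge> 1}"
proof -
  have N: "0 < n*k" using n k by simp
  have pe: "psd (n*k) (diagm (\<lambda>r. eA n 0 r + \<gamma> 1)) \<longleftrightarrow> \<gamma> 1 \<ge> 1" for \<gamma>
  proof -
    have "psd (n*k) (diagm (\<lambda>r. eA n 0 r + \<gamma> 1)) \<longleftrightarrow> (\<forall>j<n*k. eA n 0 j + \<gamma> 1 \<ge> 0)"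
      by (rule psd_diag)
    also have "\<dots> \<longleftrightarrow> \<gamma> 1 \<ge> 1"
    proof
      assume "\<forall>j<n*k. eA n 0 j + \<gamma> 1 \<ge> 0"
      then have "eA n 0 0 + \<gamma> 1 \<ge> 0" using N by blast
      then show "\<gamma> 1 \<ge> 1" by (simp add: eA_def)
    next
      assume "\<gamma> 1 \<ge> 1" then show "\<forall>j<n*k. eA n 0 j + \<gamma> 1 \<ge> 0" by (auto simp: eA_def)
    qed
    finally show ?thesis .
  qed
  show ?thesis unfolding Gamma_def add_0_right Agam_Ad pe by auto
qed

lemma polyC:
  assumes n: "n \<ge> 1" and k: "k \<ge> 1"
  shows "assumption_C (n*k) (k+1) 0 (Ad n)"
proof -
  define a :: "nat \<Rightarrow> nat \<Rightarrow> real" where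
    "a = (\<lambda>l i. if l < k+1 then (if i = l+1 then -1 else 0) else if i = 1 then -1 else 0)"
  define \<beta> :: "nat \<Rightarrow> real" where "\<beta> = (\<lambda>l. if l < k+1 then 0 else -1)"
  have s1: "(\<Sum>i\<in>{1..k+1}. a l i * \<gamma> i) = - \<gamma> (l+1)" if "l < k+1" for l \<gamma>
  proof -
    have "(\<Sum>i\<in>{1..k+1}. a l i * \<gamma> i) = (\<Sum>i\<in>{1..k+1}. if i = l+1 then - \<gamma> (l+1) else 0)"
      by (intro sum.cong refl) (use that in \<open>auto simp: a_def\<close>)
    then show ?thesis using that by simp
  qed
  have s2: "(\<Sum>i\<in>{1..k+1}. a (k+1) i * \<gamma> i) = - \<gamma> 1" for \<gamma>
  proof -
    have "(\<Sum>i\<in>{1..k+1}. a (k+1) i * \<gamma> i) = (\<Sum>i\<in>{1..k+1}. if i = 1 then - \<gamma> 1 else 0)"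
      by (intro sum.cong refl) (auto simp: a_def)
    then show ?thesis by simp
  qed
  have "Gamma (n*k) (k+1) 0 (Ad n) = {\<gamma>. supp_in {1..k+1} \<gamma> \<and> (\<forall>l<k+2. (\<Sum>i\<in>{1..k+1}. a l i * \<gamma> i) \<le> \<beta> l)}"
  proof -
    have "(\<forall>l<k+2. (\<Sum>i\<in>{1..k+1}. a l i * \<gamma> i) \<le> \<beta> l) \<longleftrightarrow>
          (\<forall>i\<in>{1..k+1}. \<gamma> i \<ge> 0) \<and> \<gamma> 1 \<ge> 1" for \<gamma>
    proof
      assume h: "\<forall>l<k+2. (\<Sum>i\<in>{1..k+1}. a l i * \<gamma> i) \<le> \<beta> l"
      have "\<gamma> i \<ge> 0" if "i \<in> {1..k+1}" for i
      proof -
        have lt: "i - 1 < k+1" and e: "i - 1 + 1 = i" using that by auto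
        then have "i - 1 < k+2" by simp
        with h have "(\<Sum>i'\<in>{1..k+1}. a (i-1) i' * \<gamma> i') \<le> \<beta> (i-1)" by blast
        moreover have "(\<Sum>i'\<in>{1..k+1}. a (i-1) i' * \<gamma> i') = - \<gamma> (i-1+1)" by (rule s1[OF lt])
        ultimately have "- \<gamma> (i-1+1) \<le> \<beta> (i-1)" by simp
        then show ?thesis using lt e by (simp add: \<beta>_def)
      qed
      moreover have "\<gamma> 1 \<ge> 1" using h[rule_format, of "k+1"] s2[of \<gamma>] by (simp add: \<beta>_def)
      ultimately show "(\<forall>i\<in>{1..k+1}. \<gamma> i \<ge> 0) \<and> \<gamma> 1 \<ge> 1" by blast
    next
      assume h: "(\<forall>i\<in>{1..k+1}. \<gamma> i \<ge> 0) \<and> \<gamma> 1 \<ge> 1"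
      show "\<forall>l<k+2. (\<Sum>i\<in>{1..k+1}. a l i * \<gamma> i) \<le> \<beta> l"
      proof (intro allI impI)
        fix l assume l: "l < k+2"
        show "(\<Sum>i\<in>{1..k+1}. a l i * \<gamma> i) \<le> \<beta> l"
        proof (cases "l < k+1")
          case True
          then show ?thesis using s1[of l \<gamma>] h by (auto simp: \<beta>_def)
        next
          case False
          then have "l = k+1" using l by simp
          then show ?thesis using s2[of \<gamma>] h by (simp add: \<beta>_def)
        qed
      qed
    qed
    then show ?thesis unfolding Gamma_char[OF n k] by auto
  qed
  then show ?thesis unfolding assumption_C_def polyhedron_in_def by auto
qed



lemma idx_eq: fixes a a' n p q :: nat assumes "a < n" "a' < n"
  shows "(p*n + a = q*n + a') \<longleftrightarrow> (p = q \<and> a = a')"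
proof
  assume h: "p*n + a = q*n + a'"
  have "(p*n + a) mod n = a" "(q*n+a') mod n = a'" using assms by simp_all
  with h have aa: "a = a'" by simp
  with h have "p*n = q*n" by simp
  with assms show "p = q \<and> a = a'" using aa by simp
qed auto

lemma eA_mod: "(a::nat) < n \<Longrightarrow> eA n i (p*n + a) = eA n i a"
  by (simp add: eA_def)

lemma qem:
  assumes n: "n \<ge> 1" and k: "k \<ge> 1"
  shows "quad_eig_mult (n*k) (k+1) 0 (Ad n) = k"
  unfolding quad_eig_mult_def
proof (rule Greatest_equality)
  show "\<exists>n'. n*k = n'*k \<and> (\<forall>i\<in>{0..k+1+0}. \<exists>M'. sym_mat n' M' \<and> is_kron_id k n' M' (Ad n i))"
  proof (rule exI[of _ n], intro conjI ballI)
    show "n*k = n*k" ..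
    fix i
    show "\<exists>M'. sym_mat n M' \<and> is_kron_id k n M' (Ad n i)"
    proof (intro exI conjI)
      show "sym_mat n (diagm (eA n i))" by (rule sym_diag)
      show "is_kron_id k n (diagm (eA n i)) (Ad n i)"
        unfolding is_kron_id_def Ad_def diagm_def by (simp add: idx_eq eA_mod)
    qed
  qed
next
  fix y assume "\<exists>n'. n*k = n'*y \<and> (\<forall>i\<in>{0..k+1+0}. \<exists>M'. sym_mat n' M' \<and> is_kron_id y n' M' (Ad n i))"
  then obtain n' M' where e: "n*k = n'*y" and kr: "is_kron_id y n' M' (Ad n 0)" by force
  show "y \<le> k"
  proof (rule ccontr)
    assume "\<not> y \<le> k"
    then have yk: "y > k" by simp
    have n'0: "n' > 0" using e n k by (metis gr0I mult_is_0 not_one_le_zero)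
    have "n' < n"
    proof (rule ccontr)
      assume "\<not> n' < n"
      then have "n*y \<le> n'*y" by simp
      moreover have "n*k < n*y" using yk n by simp
      ultimately show False using e by simp
    qed
    have y2: "1 < y" using yk k by simp
    have "Ad n 0 (0*n'+0) (0*n'+0) = M' 0 0" using kr n'0 y2 unfolding is_kron_id_def by force
    moreover have "Ad n 0 (1*n'+0) (1*n'+0) = M' 0 0" using kr n'0 y2 unfolding is_kron_id_def by force
    ultimately have "Ad n 0 0 0 = Ad n 0 n' n'" by simp
    moreover have "Ad n 0 0 0 = -1" by (simp add: Ad_def diagm_def eA_def)
    moreover have "Ad n 0 n' n' = 2" using n'0 \<open>n' < n\<close> by (simp add: Ad_def diagm_def eA_def)
    ultimately show False by simp
  qed
qed


lemma affdim_bound: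
  assumes n: "n \<ge> 1" and k: "k \<ge> 1"
  shows "int k \<ge> affdim (bgam (n*k) (k+1+0) (bd n k) ` F)"
proof (cases "F = {}")
  case True then show ?thesis by (simp add: affdim_def)
next
  case False
  let ?S = "{j. j < n*k \<and> j mod n = 0}"
  have Ssub: "?S \<subseteq> (\<lambda>p. p*n) ` {..<k}"
  proof
    fix j assume j: "j \<in> ?S"
    have e: "j div n * n + j mod n = j" by (rule div_mult_mod_eq)
    have m0: "j mod n = 0" using j by simp
    from e have "j div n * n = j" unfolding m0 add_0_right .
    then have "j = (j div n) * n" by (rule sym)
    moreover have "j < k*n" using j by (simp add: mult.commute)
    then have "j div n < k" by (rule less_mult_imp_div_less)
    ultimately show "j \<in> (\<lambda>p. p*n) ` {..<k}" by blast
  qed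
  have finS: "finite ?S" by simp
  have cardS: "card ?S \<le> k"
    using card_mono[OF _ Ssub] card_image_le[of "{..<k}" "\<lambda>p. p*n"] by simp
  have zero: "bgam (n*k) (k+1+0) (bd n k) \<gamma> j = 0" if "j \<notin> ?S" for \<gamma> j
  proof (cases "j < n*k")
    case True
    then have jm: "j mod n \<noteq> 0" using that by simp
    have "bd n k 0 j = 0" using jm by (simp add: bd_def)
    moreover have "bd n k i j = 0" if "i \<in> {1..k+1}" for i
    proof -
      have "j \<noteq> (i-2)*n" using jm by auto
      then show ?thesis using that by (simp add: bd_def)
    qed
    ultimately show ?thesis by (simp add: bgam_def)
  next
    case False then show ?thesis by (simp add: bgam_def)
  qed
  let ?D = "{(\<lambda>j. x j - y j) | x y. x \<in> bgam (n*k) (k+1+0) (bd n k) ` F \<and> y \<in> bgam (n*k) (k+1+0) (bd n k) ` F}"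
  let ?P = "\<lambda>r. \<exists>v. (\<forall>l<r. v l \<in> ?D) \<and> lin_indep r v"
  have bnd: "\<forall>r. ?P r \<longrightarrow> r \<le> k"
  proof (intro allI impI)
    fix r assume "?P r"
    then obtain v where v: "\<forall>l<r. v l \<in> ?D" "lin_indep r v" by blast
    have "\<forall>l<r. \<forall>j. j \<notin> ?S \<longrightarrow> v l j = 0"
    proof (intro allI impI)
      fix l j assume l: "l < r" and j: "j \<notin> ?S"
      from v(1) l obtain x y where "v l = (\<lambda>j. x j - y j)"
        "x \<in> bgam (n*k) (k+1+0) (bd n k) ` F" "y \<in> bgam (n*k) (k+1+0) (bd n k) ` F" by blast
      then show "v l j = 0" using zero[OF j] by auto
    qed
    from lin_indep_bound[OF finS this v(2)] cardS show "r \<le> k" by simp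
  qed
  have p0: "?P 0" by (auto simp: lin_indep_def)
  have "?P (Greatest ?P)" by (rule GreatestI_nat[where P="?P" and b=k, OF p0]) (rule bnd[rule_format])
  then have sd: "span_dim ?D \<le> k" unfolding span_dim_def by (rule bnd[rule_format])
  have ne: "(bgam (n*k) (k+1+0) (bd n k) ` F = {}) = False" using False by simp
  show ?thesis unfolding affdim_def ne if_False using sd by simp
qed



lemma qfun_zero: "qfun N A b c i (\<lambda>_. 0) = c i"
  by (simp add: qfun_def quad_form_def)

theorem mainTheorem15:
  fixes n k :: nat
  assumes "n \<ge> 1" and "k \<ge> 1"
  shows "\<exists>(N::nat) (mI::nat) (mE::nat) (A::nat \<Rightarrow> nat \<Rightarrow> nat \<Rightarrow> real) (b::nat \<Rightarrow> nat \<Rightarrow> real) (c::nat \<Rightarrow> real).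
     N = n * k \<and> mI + mE = k + 1
     \<and> (\<forall>i\<in>{0..mI+mE}. sym_mat N (A i) \<and> supp_in {..<N} (b i))
     \<and> assumption_A N mI mE A b c
     \<and> assumption_C N mI mE A
     \<and> quad_eig_mult N mI mE A = k
     \<and> (\<forall>F. semidefinite_face N mI mE A F \<longrightarrow> int k \<ge> affdim (bgam N (mI+mE) b ` F))
     \<and> Opt N mI mE A b c \<noteq> Opt_SDP N mI mE A b c
     \<and> conv_pairs (Dset N mI mE A b c) \<noteq> D_SDP N mI mE A b c"
proof -
  note n = assms(1) and k = assms(2)
  let ?N = "n*k"
  have part2: "\<forall>i\<in>{0..k+1+0}. sym_mat ?N (Ad n i) \<and> supp_in {..<?N} (bd n k i)"
  proof
    fix i
    have "bd n k i r = 0" if "\<not> r < ?N" for r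
    proof -
      have "(i-2)*n < ?N" if "2 \<le> i" "i \<le> k+1"
      proof -
        have "i - 2 < k" using that by simp
        then show ?thesis using n by (simp add: mult.commute)
      qed
      then show ?thesis using \<open>\<not> r < ?N\<close> by (auto simp: bd_def)
    qed
    then show "sym_mat ?N (Ad n i) \<and> supp_in {..<?N} (bd n k i)"
      by (auto simp: Ad_def sym_diag supp_in_def)
  qed
  have feas0: "(\<lambda>_. 0) \<in> feas ?N (k+1) 0 (Ad n) (bd n k) cd"
    by (simp add: feas_def supp_in_def qfun_zero cd_def)
  have partA: "assumption_A ?N (k+1) 0 (Ad n) (bd n k) cd"
  proof -
    have pdf: "pd ?N (Agam (k+1+0) (Ad n) (\<lambda>i. if i = 1 then 2 else 0))"
      unfolding add_0_right Agam_Ad by (rule pd_diag) (auto simp: eA_def)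
    show ?thesis unfolding assumption_A_def
    proof (intro conjI)
      show "feas ?N (k+1) 0 (Ad n) (bd n k) cd \<noteq> {}" using feas0 by auto
      show "\<exists>\<gamma>. (\<forall>i\<in>{1..k+1}. \<gamma> i \<ge> 0) \<and> pd ?N (Agam (k+1+0) (Ad n) \<gamma>)"
      proof (rule exI[of _ "\<lambda>i. if i = 1 then 2 else 0"], rule conjI)
        show "\<forall>i\<in>{1..k+1}. (\<lambda>i. if i = 1 then 2 else 0::real) i \<ge> 0" by simp
        show "pd ?N (Agam (k+1+0) (Ad n) (\<lambda>i. if i = 1 then 2 else 0))" by (rule pdf)
      qed
    qed
  qed
  have nonneg: "qfun ?N (Ad n) (bd n k) cd 0 x \<ge> 0" if "x \<in> feas ?N (k+1) 0 (Ad n) (bd n k) cd" for x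
    by (rule qfun0_nonneg[OF n k that])
  have optge: "Opt ?N (k+1) 0 (Ad n) (bd n k) cd \<ge> 0"
    unfolding Opt_def using nonneg by (auto intro!: INF_greatest)
  have sdpmem: "((\<lambda>_. 0), X0) \<in> sdp_feas ?N (k+1) 0 (Ad n) (bd n k) cd"
    and sdpval: "frob (?N + 1) (Qmat (Ad n) (bd n k) cd 0) (Ymat (\<lambda>_. 0) X0) = -1"
    using sdp_pt[OF n k] by auto
  have optsdp: "Opt_SDP ?N (k+1) 0 (Ad n) (bd n k) cd \<le> ereal (-1)"
  proof -
    have "Opt_SDP ?N (k+1) 0 (Ad n) (bd n k) cd \<le>
       ereal (frob (?N + 1) (Qmat (Ad n) (bd n k) cd 0) (Ymat (\<lambda>_. 0) X0))"
      unfolding Opt_SDP_def by (rule INF_lower2[OF sdpmem]) simp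
    then show ?thesis using sdpval by simp
  qed
  have partOpt: "Opt ?N (k+1) 0 (Ad n) (bd n k) cd \<noteq> Opt_SDP ?N (k+1) 0 (Ad n) (bd n k) cd"
  proof
    assume "Opt ?N (k+1) 0 (Ad n) (bd n k) cd = Opt_SDP ?N (k+1) 0 (Ad n) (bd n k) cd"
    then have "(0::ereal) \<le> ereal (-1)" using optge optsdp by (metis order_trans)
    then show False by simp
  qed
  have inD: "((\<lambda>_. 0), -1/2) \<in> D_SDP ?N (k+1) 0 (Ad n) (bd n k) cd"
    unfolding D_SDP_def using sdpmem sdpval by auto
  have notconv: "((\<lambda>_. 0), -1/2) \<notin> conv_pairs (Dset ?N (k+1) 0 (Ad n) (bd n k) cd)"
  proof
    assume "((\<lambda>_. 0), -1/2) \<in> conv_pairs (Dset ?N (k+1) 0 (Ad n) (bd n k) cd)"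
    then obtain p :: nat and u :: "nat \<Rightarrow> real" and P :: "nat \<Rightarrow> (nat \<Rightarrow> real) \<times> real" where h: "\<forall>l<p. u l \<ge> 0 \<and> P l \<in> Dset ?N (k+1) 0 (Ad n) (bd n k) cd"
      and s: "(-1/2::real) = (\<Sum>l<p. u l * snd (P l))"
      unfolding conv_pairs_def by (simp only: mem_Collect_eq case_prod_conv) blast
    have "u l * snd (P l) \<ge> 0" if "l < p" for l
    proof -
      from h that have u: "u l \<ge> 0" and P: "P l \<in> Dset ?N (k+1) 0 (Ad n) (bd n k) cd" by auto
      obtain x t where xt: "P l = (x, t)" by fastforce
      with P have "x \<in> feas ?N (k+1) 0 (Ad n) (bd n k) cd" "qfun ?N (Ad n) (bd n k) cd 0 x \<le> 2 * t"
        by (auto simp: Dset_def)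
      with nonneg have "t \<ge> 0" by fastforce
      with u xt show ?thesis by simp
    qed
    then have "(\<Sum>l<p. u l * snd (P l)) \<ge> 0" by (intro sum_nonneg) auto
    with s show False by simp
  qed
  have partConv: "conv_pairs (Dset ?N (k+1) 0 (Ad n) (bd n k) cd) \<noteq> D_SDP ?N (k+1) 0 (Ad n) (bd n k) cd"
    using inD notconv by auto
  show ?thesis
    apply (rule exI[of _ ?N], rule exI[of _ "k+1"], rule exI[of _ 0], rule exI[of _ "Ad n"],
           rule exI[of _ "bd n k"], rule exI[of _ cd])
    apply (intro conjI allI impI)
    apply (rule refl)
    apply simp
    using part2 partA polyC[OF n k] qem[OF n k] affdim_bound[OF n k] partOpt partConv
    apply -
    apply assumption+
    done
qed

end
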